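(* Suppose Assumption 1 holds. For every nonnegative measurable function $\rho:\mathcal{X}\times\Theta\to\mathbb{R}$ and every $x\in\mathcal{X}$, \[\int_\Theta\rho(x,\theta)\det\big(\nabla^2_\theta\mathcal{L}(\theta;x)\big)\mathbf{1}\{(x,\theta)\in\Psi_{\mathrm{SSOSP}}\}\,d\theta=\sigma^d\int_{\mathbb{R}^d}\rho\big(x,\widehat{\theta}(x,w)\big)\mathbf{1}\{(x,w)\in\Omega_{\mathrm{SSOSP}}\}\,dw.\]
   Context: Setting: $(\mathcal{X},\nu_\mathcal{X})$ is a measurable space, $\{P_\theta:\theta\in\Theta\}$ a parametric family with $\Theta\subseteq\mathbb{R}^d$, $\mathcal{R}:\Theta\to\mathbb{R}$ a regularization function, $\sigma>0$ fixed. All functions are measurable. Assumption 1 (regularity): $\Theta$ is a convex open subset of $\mathbb{R}^d$; each $P_\theta$ has a density $f(x;\theta)>0$ with respect to $\nu_\mathcal{X}$; and for each $x\in\mathcal{X}$ the map $\theta\mapsto\mathcal{L}(\theta;x):=-\log f(x;\theta)+\mathcal{R}(\theta)$ is continuously twice differentiable. For $w\in\mathbb{R}^d$ write $\mathcal{L}(\theta;x,w):=\mathcal{L}(\theta;x)+\sigma w^\top\theta$. Let $\widehat{\theta}:\mathcal{X}\times\mathbb{R}^d\to\Theta$ be a measurable map. A point $\theta$ is a strict second-order stationary point (SSOSP) of $\mathcal{L}(\cdot;x,w)$ if $\nabla_\theta\mathcal{L}(\theta;x,w)=0$ and $\nabla^2_\theta\mathcal{L}(\theta;x,w)\succ0$.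 For $\theta\in\Theta$ let $\mathcal{X}_\theta=\{x\in\mathcal{X}:\text{for some }w\in\mathbb{R}^d,\ \theta=\widehat{\theta}(x,w)\text{ and }\theta\text{ is a SSOSP of }\mathcal{L}(\cdot;x,w)\}$. Define $\Omega_{\mathrm{SSOSP}}=\{(x,w)\in\mathcal{X}\times\mathbb{R}^d:\widehat{\theta}(x,w)\text{ is a SSOSP of }\mathcal{L}(\cdot;x,w)\}$ and $\Psi_{\mathrm{SSOSP}}=\{(x,\theta)\in\mathcal{X}\times\Theta:x\in\mathcal{X}_\theta\}$. *)

theory Defs
  imports "HOL-Analysis.Analysis"
begin

definition grad :: "(real^'n \<Rightarrow> real) \<Rightarrow> real^'n \<Rightarrow> real^'n" where
  "grad g \<theta> = (\<chi> i. frechet_derivative g (at \<theta>) (axis i 1))"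

definition hess :: "(real^'n \<Rightarrow> real) \<Rightarrow> real^'n \<Rightarrow> real^'n^'n" where
  "hess g \<theta> = jacobian (grad g) (at \<theta>)"

definition posdef :: "real^'n^'n \<Rightarrow> bool" where
  "posdef A \<longleftrightarrow> (\<forall>v. v \<noteq> 0 \<longrightarrow> v \<bullet> (A *v v) > 0)"

definition SSOSP :: "(real^'n \<Rightarrow> real) \<Rightarrow> real^'n \<Rightarrow> bool" where
  "SSOSP g \<theta> \<longleftrightarrow> grad g \<theta> = 0 \<and> posdef (hess g \<theta>)"

definition Lfun :: "('x \<Rightarrow> real^'n \<Rightarrow> real) \<Rightarrow> (real^'n \<Rightarrow> real) \<Rightarrow> 'x \<Rightarrow> real^'n \<Rightarrow> real" where
  "Lfun f R x \<theta> = - ln (f x \<theta>) + R \<theta>"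

definition Lw :: "('x \<Rightarrow> real^'n \<Rightarrow> real) \<Rightarrow> (real^'n \<Rightarrow> real) \<Rightarrow> real \<Rightarrow> 'x \<Rightarrow> real^'n \<Rightarrow> real^'n \<Rightarrow> real" where
  "Lw f R \<sigma> x w \<theta> = Lfun f R x \<theta> + \<sigma> * (w \<bullet> \<theta>)"

text \<open>Assumption 1 (regularity), including that each P_theta has density f(.;theta) > 0.\<close>
definition assumption1 :: "'x measure \<Rightarrow> (real^'n) set \<Rightarrow> ('x \<Rightarrow> real^'n \<Rightarrow> real) \<Rightarrow> (real^'n \<Rightarrow> real) \<Rightarrow> bool" where
  "assumption1 M \<Theta> f R \<longleftrightarrow>
     convex \<Theta> \<and> open \<Theta> \<and>
     (\<forall>\<theta>\<in>\<Theta>. (\<lambda>x. f x \<theta>) \<in> borel_measurable M \<and>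
              (\<forall>x\<in>space M. f x \<theta> > 0) \<and>
              (\<integral>\<^sup>+ x. ennreal (f x \<theta>) \<partial>M) = 1) \<and>
     (\<forall>x\<in>space M.
        (\<forall>\<theta>\<in>\<Theta>. Lfun f R x differentiable (at \<theta>) \<and> grad (Lfun f R x) differentiable (at \<theta>)) \<and>
        continuous_on \<Theta> (hess (Lfun f R x)))"

definition X_theta :: "'x measure \<Rightarrow> ('x \<Rightarrow> real^'n \<Rightarrow> real) \<Rightarrow> (real^'n \<Rightarrow> real) \<Rightarrow> real
     \<Rightarrow> ('x \<Rightarrow> real^'n \<Rightarrow> real^'n) \<Rightarrow> real^'n \<Rightarrow> 'x set" where
  "X_theta M f R \<sigma> th \<theta> =
     {x \<in> space M. \<exists>w. \<theta> = th x w \<and> SSOSP (Lw f R \<sigma> x w) \<theta>}"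

definition Omega_SSOSP :: "'x measure \<Rightarrow> ('x \<Rightarrow> real^'n \<Rightarrow> real) \<Rightarrow> (real^'n \<Rightarrow> real) \<Rightarrow> real
     \<Rightarrow> ('x \<Rightarrow> real^'n \<Rightarrow> real^'n) \<Rightarrow> ('x \<times> (real^'n)) set" where
  "Omega_SSOSP M f R \<sigma> th = {(x, w). x \<in> space M \<and> SSOSP (Lw f R \<sigma> x w) (th x w)}"

definition Psi_SSOSP :: "'x measure \<Rightarrow> (real^'n) set \<Rightarrow> ('x \<Rightarrow> real^'n \<Rightarrow> real) \<Rightarrow> (real^'n \<Rightarrow> real) \<Rightarrow> real
     \<Rightarrow> ('x \<Rightarrow> real^'n \<Rightarrow> real^'n) \<Rightarrow> ('x \<times> (real^'n)) set" where
  "Psi_SSOSP M \<Theta> f R \<sigma> th = {(x, \<theta>). x \<in> space M \<and> \<theta> \<in> \<Theta> \<and> x \<in> X_theta M f R \<sigma> th \<theta>}"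

end

theory Submission
  imports Defs
begin

typedef 'a wo = "UNIV :: 'a set" by auto

instance wo :: (finite) finite
proof
  have "UNIV = range (Abs_wo :: 'a \<Rightarrow> 'a wo)"
    by (metis Rep_wo_inverse surj_def)
  then show "finite (UNIV :: 'a wo set)" by (metis finite finite_imageI)
qed

definition key :: "'a::finite wo \<Rightarrow> nat" where "key x = to_nat_on (UNIV::'a set) (Rep_wo x)"

lemma key_inj: "inj key"
proof -
  have "inj_on (to_nat_on (UNIV::'a set)) UNIV" by (simp add: inj_on_to_nat_on countable_finite)
  then show ?thesis unfolding key_def inj_def by (metis Rep_wo_inject UNIV_I inj_onD)
qed

instantiation wo :: (finite) wellorder
begin
definition less_eq_wo_def: "x \<le> y \<longleftrightarrow> key x \<le> key (y::'a wo)"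
definition less_wo_def: "x < y \<longleftrightarrow> key x < key (y::'a wo)"
instance
proof
  fix x y z :: "'a wo"
  show "(x < y) = (x \<le> y \<and> \<not> y \<le> x)" by (auto simp: less_eq_wo_def less_wo_def)
  show "x \<le> x" by (simp add: less_eq_wo_def)
  show "x \<le> y \<Longrightarrow> y \<le> z \<Longrightarrow> x \<le> z" by (simp add: less_eq_wo_def)
  show "x \<le> y \<Longrightarrow> y \<le> x \<Longrightarrow> x = y" using key_inj unfolding less_eq_wo_def inj_def by (metis antisym)
  show "x \<le> y \<or> y \<le> x" by (auto simp add: less_eq_wo_def)
next
  fix P :: "'a wo \<Rightarrow> bool" and a
  assume H: "\<And>x. (\<And>y. y < x \<Longrightarrow> P y) \<Longrightarrow> P x"
  have "\<forall>a. key a = n \<longrightarrow> P a" for n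
    by (induction n rule: less_induct) (metis H less_wo_def)
  then show "P a" by blast
qed
end


lemma transpose_conj:
  assumes "bij r"
  shows "r \<circ> Transposition.transpose a b \<circ> inv r = Transposition.transpose (r a) (r b)"
proof
  fix y
  obtain x where y: "y = r x" using assms by (metis bij_pointE)
  have ix: "inv r (r x) = x" using assms by (simp add: bij_is_inj)
  have inj: "inj r" using assms bij_is_inj by auto
  show "(r \<circ> Transposition.transpose a b \<circ> inv r) y = Transposition.transpose (r a) (r b) y"
    using inj unfolding y by (auto simp: ix Transposition.transpose_def inj_eq)
qed

lemma swapidseq_conj:
  assumes "swapidseq n q" "bij (r :: 'b \<Rightarrow> 'a)"
  shows "swapidseq n (r \<circ> q \<circ> inv r)"
  using assms(1)
proof (induction n q rule: swapidseq.induct)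
  case id
  have e: "r \<circ> id \<circ> inv r = id" using assms(2) by (simp add: fun_eq_iff bij_is_surj surj_f_inv_f)
  show ?case unfolding e by (rule swapidseq.id)
next
  case (comp_Suc n p a b)
  have "r \<circ> (Transposition.transpose a b \<circ> p) \<circ> inv r
        = (r \<circ> Transposition.transpose a b \<circ> inv r) \<circ> (r \<circ> p \<circ> inv r)"
    using assms(2) by (simp add: fun_eq_iff bij_is_inj)
  also have "\<dots> = Transposition.transpose (r a) (r b) \<circ> (r \<circ> p \<circ> inv r)"
    using transpose_conj[OF assms(2)] by simp
  moreover have "r a \<noteq> r b" using comp_Suc(2) assms(2) by (simp add: bij_is_inj inj_eq)
  ultimately show ?case using comp_Suc(3) swapidseq.comp_Suc by metis
qed

lemma sign_conj:
  assumes "(q :: 'b::finite \<Rightarrow> 'b) permutes UNIV" "bij (r :: 'b \<Rightarrow> 'a)"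
  shows "sign (r \<circ> q \<circ> inv r) = sign q"
proof -
  have "permutation q" using assms(1) finite_class.finite_UNIV permutation_permutes by metis
  then obtain n where n: "swapidseq n q" unfolding permutation_def by blast
  have "swapidseq n (r \<circ> q \<circ> inv r)" using swapidseq_conj[OF n assms(2)] .
  then have "evenperm (r \<circ> q \<circ> inv r) = even n" by (rule evenperm_unique) simp
  moreover have "evenperm q = even n" using n by (rule evenperm_unique) simp
  ultimately show ?thesis by (simp add: sign_def)
qed

lemma det_reindex:
  fixes A :: "'c::comm_ring_1^'a::finite^'a" and r :: "'b::finite \<Rightarrow> 'a"
  assumes r: "bij r"
  shows "det ((\<chi> i j. A $ r i $ r j) :: 'c^'b^'b) = det A"
proof -
  define \<Phi> where "\<Phi> q = r \<circ> q \<circ> inv r" for q :: "'b \<Rightarrow> 'b"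
  have ir: "inv r (r x) = x" for x using r by (simp add: bij_is_inj)
  have ri: "r (inv r y) = y" for y using r by (simp add: bij_is_surj surj_f_inv_f)
  have bijinv: "bij (inv r)" using r bij_imp_bij_inv by blast
  have bb: "bij_betw \<Phi> {q. q permutes (UNIV::'b set)} {p. p permutes (UNIV::'a set)}"
  proof (rule bij_betw_byWitness[where f' = "\<lambda>p. inv r \<circ> p \<circ> r"])
    show "\<forall>a\<in>{q. q permutes UNIV}. (\<lambda>p. inv r \<circ> p \<circ> r) (\<Phi> a) = a"
      by (auto simp: \<Phi>_def fun_eq_iff ir)
    show "\<forall>a'\<in>{p. p permutes UNIV}. \<Phi> ((\<lambda>p. inv r \<circ> p \<circ> r) a') = a'"
      by (auto simp: \<Phi>_def fun_eq_iff ri)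
    show "\<Phi> ` {q. q permutes UNIV} \<subseteq> {p. p permutes UNIV}"
      using r bijinv by (auto simp: \<Phi>_def permutes_univ bij_iff[symmetric] intro: bij_comp)
    show "(\<lambda>p. inv r \<circ> p \<circ> r) ` {p. p permutes UNIV} \<subseteq> {q. q permutes UNIV}"
      using r bijinv by (auto simp: permutes_univ bij_iff[symmetric] intro: bij_comp)
  qed
  have rb: "bij_betw r UNIV UNIV" using r by (simp add: bij_def)
  have "det A = (\<Sum>p\<in>{p. p permutes (UNIV::'a set)}. of_int (sign p) * (\<Prod>a\<in>UNIV. A $ a $ p a))"
    by (simp add: det_def)
  also have "\<dots> = (\<Sum>q\<in>{q. q permutes (UNIV::'b set)}. of_int (sign (\<Phi> q)) * (\<Prod>a\<in>UNIV. A $ a $ \<Phi> q a))"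
    using sum.reindex_bij_betw[OF bb, symmetric] by simp
  also have "\<dots> = (\<Sum>q\<in>{q. q permutes (UNIV::'b set)}. of_int (sign q) * (\<Prod>i\<in>UNIV. A $ r i $ r (q i)))"
  proof (rule sum.cong[OF refl])
    fix q assume q: "q \<in> {q. q permutes (UNIV::'b set)}"
    have "(\<Prod>a\<in>UNIV. A $ a $ \<Phi> q a) = (\<Prod>i\<in>UNIV. A $ r i $ \<Phi> q (r i))"
      using prod.reindex_bij_betw[OF rb, of "\<lambda>a. A $ a $ \<Phi> q a"] by simp
    also have "\<dots> = (\<Prod>i\<in>UNIV. A $ r i $ r (q i))" by (simp add: \<Phi>_def ir)
    finally show "of_int (sign (\<Phi> q)) * (\<Prod>a\<in>UNIV. A $ a $ \<Phi> q a) = of_int (sign q) * (\<Prod>i\<in>UNIV. A $ r i $ r (q i))"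
      using sign_conj[OF _ r, of q] q by (simp add: \<Phi>_def)
  qed
  also have "\<dots> = det ((\<chi> i j. A $ r i $ r j) :: 'c^'b^'b)"
    by (simp add: det_def)
  finally show ?thesis by simp
qed


lemma Basis_cart_eq: "(Basis :: (real^'n) set) = range (\<lambda>i. axis i 1)"
  by (auto simp: Basis_vec_def)

lemma prod_Basis_cart: "(\<Prod>b\<in>(Basis::(real^'n) set). h b) = (\<Prod>i\<in>UNIV. h (axis i 1))"
proof -
  have "inj (\<lambda>i::'n. axis i (1::real))" by (auto simp: inj_def axis_eq_axis)
  then show ?thesis unfolding Basis_cart_eq by (simp add: prod.reindex)
qed

definition Tm :: "real^'a::finite \<Rightarrow> real^'a wo" where "Tm v = (\<chi> j. v $ Rep_wo j)"
definition Ti :: "real^'a::finite wo \<Rightarrow> real^'a" where "Ti u = (\<chi> i. u $ Abs_wo i)"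

lemma Ti_Tm[simp]: "Ti (Tm v) = v" by (simp add: Ti_def Tm_def Abs_wo_inverse vec_eq_iff)
lemma Tm_Ti[simp]: "Tm (Ti u) = u" by (simp add: Ti_def Tm_def Rep_wo_inverse vec_eq_iff)

lemma linear_Tm: "linear Tm" by (rule linearI) (auto simp: Tm_def vec_eq_iff)
lemma linear_Ti: "linear Ti" by (rule linearI) (auto simp: Ti_def vec_eq_iff)
lemma bl_Tm: "bounded_linear Tm" using linear_Tm linear_conv_bounded_linear by blast
lemma bl_Ti: "bounded_linear Ti" using linear_Ti linear_conv_bounded_linear by blast
lemma meas_Tm[measurable]: "Tm \<in> borel_measurable borel"
  using bl_Tm borel_measurable_continuous_onI linear_continuous_on by blast
lemma meas_Ti[measurable]: "Ti \<in> borel_measurable borel"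
  using bl_Ti borel_measurable_continuous_onI linear_continuous_on by blast

lemma lborel_Tm: "distr lborel borel Tm = (lborel :: (real^'a::finite wo) measure)"
proof (rule lborel_eqI[symmetric])
  fix l u :: "real^'a wo"
  assume le: "\<And>b. b \<in> Basis \<Longrightarrow> l \<bullet> b \<le> u \<bullet> b"
  have pre: "Tm -` box l u = box (Ti l) (Ti u)"
  proof (rule set_eqI)
    fix x :: "real^'a"
    have "(\<forall>j. l$j < x$Rep_wo j \<and> x$Rep_wo j < u$j) \<longleftrightarrow> (\<forall>i. l$Abs_wo i < x$i \<and> x$i < u$Abs_wo i)"
    proof
      assume H: "\<forall>j. l$j < x$Rep_wo j \<and> x$Rep_wo j < u$j"
      show "\<forall>i. l$Abs_wo i < x$i \<and> x$i < u$Abs_wo i"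
      proof
        fix i show "l$Abs_wo i < x$i \<and> x$i < u$Abs_wo i"
          using H[rule_format, of "Abs_wo i"] by (simp add: Abs_wo_inverse)
      qed
    next
      assume H: "\<forall>i. l$Abs_wo i < x$i \<and> x$i < u$Abs_wo i"
      show "\<forall>j. l$j < x$Rep_wo j \<and> x$Rep_wo j < u$j"
      proof
        fix j show "l$j < x$Rep_wo j \<and> x$Rep_wo j < u$j"
          using H[rule_format, of "Rep_wo j"] by (simp add: Rep_wo_inverse)
      qed
    qed
    then show "x \<in> Tm -` box l u \<longleftrightarrow> x \<in> box (Ti l) (Ti u)"
      unfolding mem_box_cart Tm_def Ti_def vimage_eq vec_lambda_beta .
  qed
  have le': "\<forall>b\<in>Basis. Ti l \<bullet> b \<le> Ti u \<bullet> b"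
  proof
    fix b :: "real^'a" assume "b \<in> Basis"
    then obtain i where b: "b = axis i 1" unfolding Basis_cart_eq by blast
    have "l \<bullet> axis (Abs_wo i) 1 \<le> u \<bullet> axis (Abs_wo i) 1"
      by (rule le) (simp add: Basis_cart_eq)
    then show "Ti l \<bullet> b \<le> Ti u \<bullet> b" by (simp add: b inner_axis Ti_def)
  qed
  have "emeasure (distr lborel borel Tm) (box l u) = emeasure lborel (Tm -` box l u)"
    by (subst emeasure_distr) auto
  also have "\<dots> = (\<Prod>b\<in>Basis. (Ti u - Ti l) \<bullet> b)"
    unfolding pre emeasure_lborel_box_eq using le' by simp
  also have "\<dots> = (\<Prod>i\<in>UNIV. (u - l) $ Abs_wo i)"
    by (simp add: prod_Basis_cart inner_axis Ti_def)
  also have "\<dots> = (\<Prod>j\<in>UNIV. (u - l) $ j)"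
  proof -
    have "bij_betw Abs_wo (UNIV::'a set) UNIV"
      by (rule bij_betw_byWitness[where f'=Rep_wo]) (auto simp: Abs_wo_inverse Rep_wo_inverse)
    from prod.reindex_bij_betw[OF this, of "\<lambda>j. (u - l) $ j"] show ?thesis by simp
  qed
  also have "\<dots> = (\<Prod>b\<in>Basis. (u - l) \<bullet> b)"
    by (simp add: prod_Basis_cart inner_axis)
  finally show "emeasure (distr lborel borel Tm) (box l u) = (\<Prod>b\<in>Basis. (u - l) \<bullet> b)" .
qed simp

lemma nn_integral_Tm:
  assumes "\<phi> \<in> borel_measurable borel"
  shows "(\<integral>\<^sup>+u. \<phi> u \<partial>(lborel :: (real^'a::finite wo) measure)) = (\<integral>\<^sup>+v. \<phi> (Tm v) \<partial>lborel)"
proof -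
  have "(\<integral>\<^sup>+u. \<phi> u \<partial>(lborel :: (real^'a::finite wo) measure)) = (\<integral>\<^sup>+u. \<phi> u \<partial>distr lborel borel Tm)"
    by (simp add: lborel_Tm)
  also have "\<dots> = (\<integral>\<^sup>+v. \<phi> (Tm v) \<partial>lborel)"
    using assms by (subst nn_integral_distr) auto
  finally show ?thesis .
qed

lemma det_Tm_conj:
  fixes D :: "real^'a::finite \<Rightarrow> real^'a"
  assumes "linear D"
  shows "det (matrix (Tm \<circ> D \<circ> Ti)) = det (matrix D)"
proof -
  have ax: "Ti (axis k 1) = axis (Rep_wo k) 1" for k :: "'a wo"
    by (auto simp: Ti_def axis_def vec_eq_iff Abs_wo_inverse) (metis Rep_wo_inverse)+
  have "matrix (Tm \<circ> D \<circ> Ti) = (\<chi> i j. matrix D $ Rep_wo i $ Rep_wo j)"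
    by (simp add: matrix_def vec_eq_iff ax Tm_def)
  moreover have "bij (Rep_wo :: 'a wo \<Rightarrow> 'a)"
    by (rule bij_betw_byWitness[where f'=Abs_wo]) (auto simp: Abs_wo_inverse Rep_wo_inverse)
  ultimately show ?thesis using det_reindex by metis
qed


lemma cov_nn_wo:
  fixes g :: "real^('m::{finite,wellorder}) \<Rightarrow> real^('m::{finite,wellorder})" and F :: "real^('m::{finite,wellorder}) \<Rightarrow> real"
  assumes S: "S \<in> sets lebesgue"
    and der: "\<And>x. x \<in> S \<Longrightarrow> (g has_derivative g' x) (at x within S)"
    and inj: "inj_on g S"
    and Fnn: "\<And>y. 0 \<le> F y"
    and m1: "(\<lambda>x. indicator S x * (\<bar>det (matrix (g' x))\<bar> * F (g x))) \<in> borel_measurable borel"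
    and m2: "(\<lambda>y. indicator (g ` S) y * F y) \<in> borel_measurable borel"
  shows "(\<integral>\<^sup>+x. ennreal (indicator S x * (\<bar>det (matrix (g' x))\<bar> * F (g x))) \<partial>lborel)
       = (\<integral>\<^sup>+y. ennreal (indicator (g ` S) y * F y) \<partial>lborel)"
proof -
  define h where "h x = \<bar>det (matrix (g' x))\<bar> * F (g x)" for x
  have hnn: "0 \<le> h x" for x by (simp add: h_def Fnn)
  have vec1: "(\<lambda>x. \<bar>det (matrix (g' x))\<bar> *\<^sub>R (vec (F (g x)) :: real^1)) = (\<lambda>x. vec (h x))"
    by (auto simp: h_def vec_eq_iff)
  have iff: "(\<lambda>y. vec (F y) :: real^1) absolutely_integrable_on (g ` S)
     \<longleftrightarrow> (\<lambda>x. vec (h x) :: real^1) absolutely_integrable_on S"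
    using absolutely_integrable_change_of_variables[OF S der inj, of "\<lambda>y. vec (F y) :: real^1"]
    unfolding vec1 .
  then have iff2: "F integrable_on (g ` S) \<longleftrightarrow> h integrable_on S"
    unfolding absolutely_integrable_on_1_iff
    by (simp add: absolutely_integrable_on_iff_nonneg Fnn hnn)
  show ?thesis
  proof (cases "h integrable_on S")
    case True
    then have Fi: "F integrable_on (g ` S)" using iff2 by simp
    have "integral (g ` S) (\<lambda>y. vec (F y) :: real^1) = integral S (\<lambda>x. vec (h x) :: real^1)"
      using integral_change_of_variables[OF S der inj, of "\<lambda>y. vec (F y) :: real^1"] iff True Fi
      unfolding vec1 absolutely_integrable_on_1_iff
      by (simp add: absolutely_integrable_on_iff_nonneg Fnn hnn)
    then have eqI: "integral (g ` S) F = integral S h"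
      unfolding integral_on_1_eq by (simp add: vec_eq_iff)
    have "(\<integral>\<^sup>+x. ennreal (indicator S x * h x) \<partial>lborel) = integral S h"
      using nn_integral_has_integral_lebesgue[of S h] True hnn by (simp add: integrable_integral)
    moreover have "(\<integral>\<^sup>+y. ennreal (indicator (g ` S) y * F y) \<partial>lborel) = integral (g ` S) F"
      using nn_integral_has_integral_lebesgue[of "g ` S" F] Fi Fnn by (simp add: integrable_integral)
    ultimately show ?thesis using eqI by (simp add: h_def)
  next
    case False
    then have nF: "\<not> F integrable_on (g ` S)" using iff2 by simp
    have "(\<integral>\<^sup>+x. ennreal (indicator S x * h x) \<partial>lborel) = \<infinity>"
    proof (rule ccontr)
      assume "(\<integral>\<^sup>+x. ennreal (indicator S x * h x) \<partial>lborel) \<noteq> \<infinity>"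
      then have "(\<lambda>x. indicator S x * h x) integrable_on UNIV"
        using m1 hnn by (intro nn_integral_integrable_on) (auto simp: h_def top.not_eq_extremum)
      moreover have "(\<lambda>x. indicator S x * h x) = (\<lambda>x. if x \<in> S then h x else 0)"
        by (auto simp: indicator_def)
      ultimately have "h integrable_on S"
        by (simp add: integrable_restrict_UNIV)
      with False show False by simp
    qed
    moreover have "(\<integral>\<^sup>+y. ennreal (indicator (g ` S) y * F y) \<partial>lborel) = \<infinity>"
    proof (rule ccontr)
      assume "(\<integral>\<^sup>+y. ennreal (indicator (g ` S) y * F y) \<partial>lborel) \<noteq> \<infinity>"
      then have "(\<lambda>y. indicator (g ` S) y * F y) integrable_on UNIV"
        using m2 Fnn by (intro nn_integral_integrable_on) (auto simp: top.not_eq_extremum)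
      moreover have "(\<lambda>y. indicator (g ` S) y * F y) = (\<lambda>y. if y \<in> g ` S then F y else 0)"
        by (auto simp: indicator_def)
      ultimately have "F integrable_on (g ` S)"
        by (simp add: integrable_restrict_UNIV)
      with nF show False by simp
    qed
    ultimately show ?thesis by (simp add: h_def)
  qed
qed



lemma cov_nn:
  fixes g :: "real^'n::finite \<Rightarrow> real^'n" and F :: "real^'n \<Rightarrow> real"
  assumes S: "S \<in> sets borel"
    and der: "\<And>x. x \<in> S \<Longrightarrow> (g has_derivative g' x) (at x)"
    and inj: "inj_on g S"
    and Fnn: "\<And>y. 0 \<le> F y"
    and m1: "(\<lambda>x. indicator S x * (\<bar>det (matrix (g' x))\<bar> * F (g x))) \<in> borel_measurable borel"
    and m2: "(\<lambda>y. indicator (g ` S) y * F y) \<in> borel_measurable borel"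
  shows "(\<integral>\<^sup>+x. ennreal (indicator S x * (\<bar>det (matrix (g' x))\<bar> * F (g x))) \<partial>lborel)
       = (\<integral>\<^sup>+y. ennreal (indicator (g ` S) y * F y) \<partial>lborel)"
proof -
  define \<phi>1 where "\<phi>1 x = indicator S x * (\<bar>det (matrix (g' x))\<bar> * F (g x))" for x
  define \<phi>2 where "\<phi>2 y = indicator (g ` S) y * F y" for y
  define S' :: "(real^'n wo) set" where "S' = Ti -` S"
  define g2 :: "real^'n wo \<Rightarrow> real^'n wo" where "g2 = Tm \<circ> g \<circ> Ti"
  define g2' :: "real^'n wo \<Rightarrow> real^'n wo \<Rightarrow> real^'n wo" where "g2' y = Tm \<circ> g' (Ti y) \<circ> Ti" for y
  define F2 where "F2 = F \<circ> Ti"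
  have S'b: "S' \<in> sets borel" unfolding S'_def using S meas_Ti
    by (metis measurable_sets sets_borel space_borel vimage_Int inf_top.right_neutral)
  then have S'l: "S' \<in> sets lebesgue" by simp
  have der2: "(g2 has_derivative g2' y) (at y within S')" if y: "y \<in> S'" for y
  proof -
    have "Ti y \<in> S" using y by (simp add: S'_def)
    then have d: "(g has_derivative g' (Ti y)) (at (Ti y))" by (rule der)
    have "(Ti has_derivative Ti) (at y)" by (rule bounded_linear_imp_has_derivative[OF bl_Ti])
    from has_derivative_compose[OF this d]
    have "((\<lambda>x. g (Ti x)) has_derivative (\<lambda>x. g' (Ti y) (Ti x))) (at y)" .
    from bounded_linear.has_derivative[OF bl_Tm this]
    have "((\<lambda>x. Tm (g (Ti x))) has_derivative (\<lambda>x. Tm (g' (Ti y) (Ti x)))) (at y)" .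
    then have "(g2 has_derivative g2' y) (at y)" by (simp add: g2_def g2'_def comp_def)
    then show ?thesis by (rule has_derivative_at_withinI)
  qed
  have inj2: "inj_on g2 S'"
  proof (rule inj_onI)
    fix a b assume "a \<in> S'" "b \<in> S'" "g2 a = g2 b"
    then have "Ti (Tm (g (Ti a))) = Ti (Tm (g (Ti b)))" "Ti a \<in> S" "Ti b \<in> S" by (auto simp: g2_def S'_def)
    then have "Ti a = Ti b" using inj by (auto dest: inj_onD)
    then show "a = b" by (metis Tm_Ti)
  qed
  have img: "g2 ` S' = Ti -` (g ` S)"
  proof
    show "g2 ` S' \<subseteq> Ti -` (g ` S)" by (auto simp: g2_def S'_def)
    show "Ti -` (g ` S) \<subseteq> g2 ` S'"
    proof
      fix y assume "y \<in> Ti -` (g ` S)"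
      then obtain x where x: "x \<in> S" "Ti y = g x" by auto
      then have "Tm x \<in> S'" "g2 (Tm x) = y" by (auto simp: S'_def g2_def) (metis Tm_Ti)
      then show "y \<in> g2 ` S'" by blast
    qed
  qed
  have detq: "det (matrix (g2' y)) = det (matrix (g' (Ti y)))" if "y \<in> S'" for y
  proof -
    have "Ti y \<in> S" using that by (simp add: S'_def)
    then have "linear (g' (Ti y))" using der has_derivative_linear by blast
    then show ?thesis unfolding g2'_def by (rule det_Tm_conj)
  qed
  have e1: "indicator S' y * (\<bar>det (matrix (g2' y))\<bar> * F2 (g2 y)) = \<phi>1 (Ti y)" for y
    by (cases "y \<in> S'") (auto simp: \<phi>1_def detq F2_def g2_def S'_def indicator_def)
  have e2: "indicator (g2 ` S') y * F2 y = \<phi>2 (Ti y)" for y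
    by (simp add: img \<phi>2_def F2_def indicator_def)
  have m1': "(\<lambda>y. indicator S' y * (\<bar>det (matrix (g2' y))\<bar> * F2 (g2 y))) \<in> borel_measurable borel"
    unfolding e1 using m1 unfolding \<phi>1_def[symmetric] by measurable
  have m2': "(\<lambda>y. indicator (g2 ` S') y * F2 y) \<in> borel_measurable borel"
    unfolding e2 using m2 unfolding \<phi>2_def[symmetric] by measurable
  have main: "(\<integral>\<^sup>+y. ennreal (indicator S' y * (\<bar>det (matrix (g2' y))\<bar> * F2 (g2 y))) \<partial>lborel)
       = (\<integral>\<^sup>+y. ennreal (indicator (g2 ` S') y * F2 y) \<partial>lborel)"
    using cov_nn_wo[OF S'l der2 inj2 _ m1' m2'] Fnn by (simp add: F2_def)
  have "(\<integral>\<^sup>+x. ennreal (\<phi>1 x) \<partial>lborel) = (\<integral>\<^sup>+y. ennreal (\<phi>1 (Ti y)) \<partial>lborel)"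
    using nn_integral_Tm[of "\<lambda>y. ennreal (\<phi>1 (Ti y))"] m1 unfolding \<phi>1_def[symmetric]
    by (simp add: measurable_compose[OF meas_Ti])
  also have "\<dots> = (\<integral>\<^sup>+y. ennreal (\<phi>2 (Ti y)) \<partial>lborel)" using main unfolding e1 e2 .
  also have "\<dots> = (\<integral>\<^sup>+x. ennreal (\<phi>2 x) \<partial>lborel)"
    using nn_integral_Tm[of "\<lambda>y. ennreal (\<phi>2 (Ti y))"] m2 unfolding \<phi>2_def[symmetric]
    by (simp add: measurable_compose[OF meas_Ti])
  finally show ?thesis by (simp add: \<phi>1_def \<phi>2_def)
qed



lemma det_nonzero_if_ker:
  fixes A :: "real^'n^'n"
  assumes "\<And>x. A *v x = 0 \<Longrightarrow> x = 0"
  shows "det A \<noteq> 0"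
  using assms invertible_det_nz invertible_left_inverse matrix_left_invertible_ker by metis

lemma continuous_on_det_comp:
  fixes M :: "'a::topological_space \<Rightarrow> real^'n^'n"
  assumes "continuous_on T M"
  shows "continuous_on T (\<lambda>t. det (M t))"
proof -
  have c: "continuous_on T (\<lambda>t. M t $ i $ j)" for i j
    using assms by (intro continuous_intros)
  show ?thesis unfolding det_def
    by (intro continuous_intros c)
qed

lemma posdef_det_pos:
  fixes A :: "real^'n^'n"
  assumes pd: "posdef A"
  shows "det A > 0"
proof -
  define M where "M t = (1 - t) *\<^sub>R A + t *\<^sub>R mat 1" for t :: real
  have nz: "det (M t) \<noteq> 0" if t: "0 \<le> t" "t \<le> 1" for t
  proof (rule det_nonzero_if_ker)
    fix x assume x: "M t *v x = 0"
    show "x = 0"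
    proof (rule ccontr)
      assume "x \<noteq> 0"
      then have a: "x \<bullet> (A *v x) > 0" using pd by (simp add: posdef_def)
      have b: "x \<bullet> x > 0" using \<open>x \<noteq> 0\<close> by simp
      have "M t *v x = (1 - t) *\<^sub>R (A *v x) + t *\<^sub>R x"
        by (simp add: M_def matrix_vector_mult_add_rdistrib scaleR_matrix_vector_assoc[symmetric])
      then have "x \<bullet> (M t *v x) = (1 - t) * (x \<bullet> (A *v x)) + t * (x \<bullet> x)"
        by (simp add: inner_add_right)
      moreover have "(1 - t) * (x \<bullet> (A *v x)) + t * (x \<bullet> x) > 0"
      proof (cases "t = 1")
        case True then show ?thesis using b by simp
      next
        case False
        then have "1 - t > 0" using t by simp
        then have "(1 - t) * (x \<bullet> (A *v x)) > 0" using a by simp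
        moreover have "t * (x \<bullet> x) \<ge> 0" using t b by simp
        ultimately show ?thesis by linarith
      qed
      ultimately show False using x by simp
    qed
  qed
  have cont: "continuous_on {0..1} (\<lambda>t. det (M t))"
    unfolding M_def by (intro continuous_on_det_comp continuous_intros)
  show ?thesis
  proof (rule ccontr)
    assume "\<not> det A > 0"
    then have "det (M 0) \<le> 0" by (simp add: M_def)
    moreover have "0 \<le> det (M 1)" by (simp add: M_def)
    ultimately obtain t where "0 \<le> t" "t \<le> 1" "det (M t) = 0"
      using IVT'[of "\<lambda>t. det (M t)" 0 0 1] cont by auto
    with nz show False by blast
  qed
qed

lemma posdef_sphere:
  fixes A :: "real^'n^'n"
  shows "posdef A \<longleftrightarrow> (\<forall>v \<in> sphere 0 1. v \<bullet> (A *v v) > 0)"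
proof
  assume "posdef A" then show "\<forall>v \<in> sphere 0 1. v \<bullet> (A *v v) > 0"
    by (auto simp: posdef_def) (metis norm_zero zero_neq_one)
next
  assume H: "\<forall>v \<in> sphere 0 1. v \<bullet> (A *v v) > 0"
  show "posdef A" unfolding posdef_def
  proof (intro allI impI)
    fix v :: "real^'n" assume "v \<noteq> 0"
    define u where "u = (1 / norm v) *\<^sub>R v"
    have "u \<in> sphere 0 1" using \<open>v \<noteq> 0\<close> by (simp add: u_def)
    then have "u \<bullet> (A *v u) > 0" using H by blast
    moreover have "u \<bullet> (A *v u) = (1 / norm v)^2 * (v \<bullet> (A *v v))"
      by (simp add: u_def matrix_vector_mult_scaleR power2_eq_square)
    ultimately show "v \<bullet> (A *v v) > 0" using \<open>v \<noteq> 0\<close>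
      by (simp add: zero_less_mult_iff)
  qed
qed

lemma open_posdef: "open {A :: real^'n^'n. posdef A}"
proof -
  define T where "T = {p :: (real^'n) \<times> (real^'n^'n). fst p \<bullet> (snd p *v fst p) \<le> 0}"
  have cT: "closed T"
  proof -
    have "continuous_on UNIV (\<lambda>p :: (real^'n) \<times> (real^'n^'n). fst p \<bullet> (snd p *v fst p))"
      unfolding inner_vec_def matrix_vector_mult_def
      by (intro continuous_intros)
    then show ?thesis unfolding T_def
      by (intro closed_Collect_le) (auto intro: continuous_intros)
  qed
  have "closed {A. \<exists>v. v \<in> sphere 0 1 \<and> (v, A) \<in> T}"
    by (rule closed_compact_projection[OF compact_sphere cT])
  moreover have "- {A :: real^'n^'n. posdef A} = {A. \<exists>v. v \<in> sphere 0 1 \<and> (v, A) \<in> T}"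
    by (auto simp: posdef_sphere T_def not_less mem_sphere_0) (metis mem_sphere_0 linorder_not_le)
  ultimately show ?thesis by (metis closed_Compl double_complement open_closed)
qed

lemma det_scaleR_mat:
  fixes A :: "real^'n^'n"
  shows "det (c *\<^sub>R A) = c ^ CARD('n) * det A"
proof -
  have mv: "matrix ((*\<^sub>R) c) *v y = c *\<^sub>R y" for y :: "real^'n"
    using matrix_vector_mul(3)[OF bounded_linear_scaleR_right[of c]] by metis
  have "c *\<^sub>R A = matrix ((*\<^sub>R) c) ** A"
    unfolding matrix_eq
    by (simp add: matrix_vector_mul_assoc[symmetric] mv scaleR_matrix_vector_assoc)
  then show ?thesis by (simp add: det_mul)
qed



theorem lemma5:
  fixes M :: "'x measure" and \<Theta> :: "(real^'n) set"
    and f :: "'x \<Rightarrow> real^'n \<Rightarrow> real" and R :: "real^'n \<Rightarrow> real" and \<sigma> :: real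
    and th :: "'x \<Rightarrow> real^'n \<Rightarrow> real^'n"
    and \<rho> :: "'x \<Rightarrow> real^'n \<Rightarrow> real" and x :: 'x
  assumes A1: "assumption1 M \<Theta> f R"
    and f_meas: "(\<lambda>(x, \<theta>). f x \<theta>) \<in> borel_measurable (M \<Otimes>\<^sub>M lborel)"
    and R_meas: "R \<in> borel_measurable lborel"
    and sigma_pos: "\<sigma> > 0"
    and th_meas: "(\<lambda>(x, w). th x w) \<in> borel_measurable (M \<Otimes>\<^sub>M lborel)"
    and th_range: "\<And>x w. x \<in> space M \<Longrightarrow> th x w \<in> \<Theta>"
    and rho_meas: "(\<lambda>(x, \<theta>). \<rho> x \<theta>) \<in> borel_measurable (M \<Otimes>\<^sub>M lborel)"
    and rho_nonneg: "\<And>x \<theta>. \<rho> x \<theta> \<ge> 0"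
    and x: "x \<in> space M"
  shows "(\<integral>\<^sup>+ \<theta>. ennreal (\<rho> x \<theta> * det (hess (Lfun f R x) \<theta>)
                     * indicator (Psi_SSOSP M \<Theta> f R \<sigma> th) (x, \<theta>)) * indicator \<Theta> \<theta> \<partial>lborel)
       = ennreal (\<sigma> ^ CARD('n)) *
         (\<integral>\<^sup>+ w. ennreal (\<rho> x (th x w) * indicator (Omega_SSOSP M f R \<sigma> th) (x, w)) \<partial>lborel)"
proof -
  have oT: "open \<Theta>" using A1 by (simp add: assumption1_def)
  define L where "L = Lfun f R x"
  define H where "H = hess L"
  define gr where "gr = grad L"
  define c where "c = - (1 / \<sigma>)"
  define g where "g \<theta> = c *\<^sub>R gr \<theta>" for \<theta>
  define g' where "g' \<theta> = (\<lambda>h. (c *\<^sub>R H \<theta>) *v h)" for \<theta>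
  define F where "F w = \<rho> x (th x w)" for w
  define S where "S = {\<theta> \<in> \<Theta>. th x (g \<theta>) = \<theta> \<and> posdef (H \<theta>)}"
  have dL: "L differentiable (at \<theta>)" and dG: "gr differentiable (at \<theta>)" if "\<theta> \<in> \<Theta>" for \<theta>
    using A1 x that unfolding assumption1_def L_def gr_def by auto
  have cH: "continuous_on \<Theta> H" using A1 x unfolding assumption1_def H_def L_def by auto
  have thT: "th x w \<in> \<Theta>" for w using th_range x by blast

  define D where "D \<theta> = frechet_derivative gr (at \<theta>)" for \<theta>
  have Dd: "(gr has_derivative D \<theta>) (at \<theta>)" if "\<theta> \<in> \<Theta>" for \<theta>
    using dG[OF that] frechet_derivative_works unfolding D_def by blast
  have HD: "(\<lambda>h. H \<theta> *v h) = D \<theta>" if "\<theta> \<in> \<Theta>" for \<theta>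
  proof -
    have "linear (D \<theta>)" using Dd[OF that] has_derivative_linear by blast
    then show ?thesis unfolding H_def hess_def jacobian_def gr_def[symmetric] D_def[symmetric]
      by simp
  qed

  have gradLw: "grad (Lw f R \<sigma> x w) \<theta> = gr \<theta> + \<sigma> *\<^sub>R w" if "\<theta> \<in> \<Theta>" for \<theta> w
  proof -
    have d1: "(L has_derivative frechet_derivative L (at \<theta>)) (at \<theta>)"
      using dL[OF that] frechet_derivative_works by blast
    have eqf: "Lw f R \<sigma> x w = (\<lambda>t. L t + \<sigma> * (w \<bullet> t))"
      by (simp add: fun_eq_iff Lw_def L_def)
    have "((\<lambda>t. L t + \<sigma> * (w \<bullet> t)) has_derivative (\<lambda>h. frechet_derivative L (at \<theta>) h + \<sigma> * (w \<bullet> h))) (at \<theta>)"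
      by (intro derivative_eq_intros) (auto intro: d1)
    then have "frechet_derivative (Lw f R \<sigma> x w) (at \<theta>) = (\<lambda>h. frechet_derivative L (at \<theta>) h + \<sigma> * (w \<bullet> h))"
      unfolding eqf by (rule frechet_derivative_at[symmetric])
    then show ?thesis
      by (simp add: grad_def gr_def vec_eq_iff inner_axis)
  qed
  have hessLw: "hess (Lw f R \<sigma> x w) \<theta> = H \<theta>" if "\<theta> \<in> \<Theta>" for \<theta> w
  proof -
    have "((\<lambda>t. gr t + \<sigma> *\<^sub>R w) has_derivative D \<theta>) (at \<theta>)"
      using Dd[OF that] by (intro derivative_eq_intros) auto
    then have "(grad (Lw f R \<sigma> x w) has_derivative D \<theta>) (at \<theta>)"
      by (rule has_derivative_transform_within_open[OF _ oT that]) (simp add: gradLw)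
    then have "frechet_derivative (grad (Lw f R \<sigma> x w)) (at \<theta>) = D \<theta>"
      by (rule frechet_derivative_at[symmetric])
    then show ?thesis by (simp add: hess_def H_def jacobian_def D_def gr_def)
  qed
  have SSOSP_char: "SSOSP (Lw f R \<sigma> x w) \<theta> \<longleftrightarrow> w = g \<theta> \<and> posdef (H \<theta>)" if "\<theta> \<in> \<Theta>" for \<theta> w
  proof -
    have "gr \<theta> + \<sigma> *\<^sub>R w = 0 \<longleftrightarrow> w = g \<theta>"
    proof
      assume e: "gr \<theta> + \<sigma> *\<^sub>R w = 0"
      then have "\<sigma> *\<^sub>R w = - gr \<theta>" by (metis add.commute eq_neg_iff_add_eq_0)
      then have "(1/\<sigma>) *\<^sub>R (\<sigma> *\<^sub>R w) = (1/\<sigma>) *\<^sub>R (- gr \<theta>)" by simp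
      then show "w = g \<theta>" using sigma_pos by (simp add: g_def c_def)
    next
      assume "w = g \<theta>"
      then show "gr \<theta> + \<sigma> *\<^sub>R w = 0" using sigma_pos by (simp add: g_def c_def)
    qed
    then show ?thesis using that by (simp add: SSOSP_def gradLw hessLw)
  qed

  have gder: "(g has_derivative g' \<theta>) (at \<theta>)" if "\<theta> \<in> \<Theta>" for \<theta>
  proof -
    have "(gr has_derivative (\<lambda>h. H \<theta> *v h)) (at \<theta>)" using Dd[OF that] HD[OF that] by simp
    from bounded_linear.has_derivative[OF bounded_linear_scaleR_right this, of c]
    have "((\<lambda>t. c *\<^sub>R gr t) has_derivative (\<lambda>h. c *\<^sub>R (H \<theta> *v h))) (at \<theta>)" .
    moreover have "g = (\<lambda>t. c *\<^sub>R gr t)" by (simp add: fun_eq_iff g_def)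
    ultimately show ?thesis by (simp add: g'_def scaleR_matrix_vector_assoc)
  qed
  have detg': "\<bar>det (matrix (g' \<theta>))\<bar> = (1/\<sigma>) ^ CARD('n) * \<bar>det (H \<theta>)\<bar>" for \<theta>
  proof -
    have "det (matrix (g' \<theta>)) = c ^ CARD('n) * det (H \<theta>)"
      unfolding g'_def matrix_of_matrix_vector_mul by (rule det_scaleR_mat)
    moreover have "\<bar>c\<bar> = 1/\<sigma>" using sigma_pos by (simp add: c_def)
    ultimately show ?thesis by (simp add: abs_mult power_abs)
  qed

  have Psi_iff: "(x, \<theta>) \<in> Psi_SSOSP M \<Theta> f R \<sigma> th \<longleftrightarrow> \<theta> \<in> S" if "\<theta> \<in> \<Theta>" for \<theta>
    using that x by (auto simp: Psi_SSOSP_def X_theta_def S_def SSOSP_char)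
  have inj: "inj_on g S"
  proof (rule inj_onI)
    fix a b assume "a \<in> S" "b \<in> S" "g a = g b"
    then show "a = b" unfolding S_def by (metis (mono_tags, lifting) mem_Collect_eq)
  qed
  have img: "w \<in> g ` S \<longleftrightarrow> SSOSP (Lw f R \<sigma> x w) (th x w)" for w
  proof
    assume "w \<in> g ` S"
    then obtain \<theta> where t: "\<theta> \<in> S" "w = g \<theta>" by blast
    then have "th x w = \<theta>" "\<theta> \<in> \<Theta>" "posdef (H \<theta>)" by (auto simp: S_def)
    then show "SSOSP (Lw f R \<sigma> x w) (th x w)" using t SSOSP_char by simp
  next
    assume "SSOSP (Lw f R \<sigma> x w) (th x w)"
    then have "w = g (th x w)" "posdef (H (th x w))" using SSOSP_char[OF thT] by auto
    then have "th x w \<in> S" using thT by (auto simp: S_def)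
    then show "w \<in> g ` S" using \<open>w = g (th x w)\<close> by blast
  qed
  have Omega_iff: "(x, w) \<in> Omega_SSOSP M f R \<sigma> th \<longleftrightarrow> w \<in> g ` S" for w
    using x by (simp add: Omega_SSOSP_def img)

  have rho_x[measurable]: "(\<lambda>\<theta>. \<rho> x \<theta>) \<in> borel_measurable borel"
    using measurable_Pair2[OF rho_meas x] by simp
  have th_x[measurable]: "th x \<in> borel \<rightarrow>\<^sub>M borel"
    using measurable_Pair2[OF th_meas x] by simp
  have Tb[measurable]: "\<Theta> \<in> sets borel" using oT by simp
  have cgr: "continuous_on \<Theta> gr"
    using dG differentiable_imp_continuous_within continuous_at_imp_continuous_on by blast
  have cg: "continuous_on \<Theta> g" unfolding g_def by (intro continuous_intros cgr)
  define ge where "ge \<theta> = (if \<theta> \<in> \<Theta> then g \<theta> else 0)" for \<theta>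
  have ge_m[measurable]: "ge \<in> borel \<rightarrow>\<^sub>M borel"
    unfolding ge_def by (rule borel_measurable_continuous_on_if[OF Tb cg continuous_on_const])
  define dHe where "dHe \<theta> = (if \<theta> \<in> \<Theta> then det (H \<theta>) else 0)" for \<theta>
  have dHe_m[measurable]: "dHe \<in> borel \<rightarrow>\<^sub>M borel"
    unfolding dHe_def
    by (rule borel_measurable_continuous_on_if[OF Tb continuous_on_det_comp[OF cH] continuous_on_const])
  define P where "P = \<Theta> \<inter> H -` {A. posdef A}"
  have oP: "open P"
  proof -
    have "open (H -` {A. posdef A} \<inter> \<Theta>)"
      using iffD1[OF continuous_on_open_vimage[OF oT] cH] open_posdef by blast
    then show ?thesis unfolding P_def by (simp add: Int_commute)
  qed
  have P_m[measurable]: "P \<in> sets borel" using oP by simp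
  have Seq: "S = P \<inter> {\<theta> \<in> space borel. th x (ge \<theta>) = id \<theta>}"
    by (auto simp: S_def P_def ge_def)
  have S_m[measurable]: "S \<in> sets borel" unfolding Seq by measurable
  have Oeq: "g ` S = {w \<in> space borel. ge (th x w) = id w} \<inter> th x -` P"
  proof (rule set_eqI)
    fix w
    have "w \<in> g ` S \<longleftrightarrow> w = g (th x w) \<and> posdef (H (th x w))"
      using img SSOSP_char[OF thT] by simp
    also have "\<dots> \<longleftrightarrow> w \<in> {w \<in> space borel. ge (th x w) = id w} \<inter> th x -` P"
      using thT[of w] by (auto simp: ge_def P_def)
    finally show "w \<in> g ` S \<longleftrightarrow> w \<in> {w \<in> space borel. ge (th x w) = id w} \<inter> th x -` P" .
  qed
  have O_m[measurable]: "g ` S \<in> sets borel" unfolding Oeq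
    by (intro sets.Int measurable_equality_set measurable_sets_borel[OF th_x P_m]) measurable

  define \<phi>1 where "\<phi>1 \<theta> = indicator S \<theta> * (\<bar>det (matrix (g' \<theta>))\<bar> * F (g \<theta>))" for \<theta>
  have \<phi>1eq: "\<phi>1 = (\<lambda>\<theta>. indicator S \<theta> * ((1/\<sigma>) ^ CARD('n) * \<bar>dHe \<theta>\<bar> * \<rho> x (th x (ge \<theta>))))"
    by (auto simp: fun_eq_iff \<phi>1_def indicator_def detg' dHe_def ge_def F_def S_def)
  have m1[measurable]: "\<phi>1 \<in> borel_measurable borel" unfolding \<phi>1eq by measurable
  have m2: "(\<lambda>y. indicator (g ` S) y * F y) \<in> borel_measurable borel"
    unfolding F_def by measurable
  have cov: "(\<integral>\<^sup>+\<theta>. ennreal (\<phi>1 \<theta>) \<partial>lborel) = (\<integral>\<^sup>+y. ennreal (indicator (g ` S) y * F y) \<partial>lborel)"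
    unfolding \<phi>1_def
  proof (rule cov_nn[OF S_m _ inj])
    show "\<And>\<theta>. \<theta> \<in> S \<Longrightarrow> (g has_derivative g' \<theta>) (at \<theta>)" using gder by (auto simp: S_def)
    show "\<And>y. 0 \<le> F y" by (simp add: F_def rho_nonneg)
    show "(\<lambda>\<theta>. indicator S \<theta> * (\<bar>det (matrix (g' \<theta>))\<bar> * F (g \<theta>))) \<in> borel_measurable borel"
      using m1 unfolding \<phi>1_def .
    show "(\<lambda>y. indicator (g ` S) y * F y) \<in> borel_measurable borel" using m2 .
  qed

  have lhs_pt: "ennreal (\<rho> x \<theta> * det (hess (Lfun f R x) \<theta>) * indicator (Psi_SSOSP M \<Theta> f R \<sigma> th) (x, \<theta>)) * indicator \<Theta> \<theta>
      = ennreal (\<sigma> ^ CARD('n)) * ennreal (\<phi>1 \<theta>)" for \<theta>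
  proof (cases "\<theta> \<in> S")
    case True
    then have tT: "\<theta> \<in> \<Theta>" and fx: "th x (g \<theta>) = \<theta>" and pd: "posdef (H \<theta>)" by (auto simp: S_def)
    have dpos: "det (H \<theta>) > 0" using posdef_det_pos[OF pd] .
    have "\<sigma> ^ CARD('n) * \<phi>1 \<theta> = \<rho> x \<theta> * det (H \<theta>)"
      using True fx dpos sigma_pos
      by (simp add: \<phi>1_def detg' F_def power_one_over field_simps)
    then show ?thesis using True tT Psi_iff[OF tT] sigma_pos
      by (simp add: ennreal_mult'[symmetric] H_def L_def)
  next
    case False
    have "\<phi>1 \<theta> = 0" using False by (simp add: \<phi>1_def)
    moreover have "ennreal (\<rho> x \<theta> * det (hess (Lfun f R x) \<theta>) * indicator (Psi_SSOSP M \<Theta> f R \<sigma> th) (x, \<theta>)) * indicator \<Theta> \<theta> = 0"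
      using False Psi_iff by (cases "\<theta> \<in> \<Theta>") auto
    ultimately show ?thesis by simp
  qed
  have rhs_pt: "ennreal (\<rho> x (th x w) * indicator (Omega_SSOSP M f R \<sigma> th) (x, w))
      = ennreal (indicator (g ` S) w * F w)" for w
    by (simp add: Omega_iff F_def indicator_def)

  have "(\<integral>\<^sup>+ \<theta>. ennreal (\<rho> x \<theta> * det (hess (Lfun f R x) \<theta>)
                     * indicator (Psi_SSOSP M \<Theta> f R \<sigma> th) (x, \<theta>)) * indicator \<Theta> \<theta> \<partial>lborel)
       = (\<integral>\<^sup>+ \<theta>. ennreal (\<sigma> ^ CARD('n)) * ennreal (\<phi>1 \<theta>) \<partial>lborel)"
    by (simp add: lhs_pt)
  also have "\<dots> = ennreal (\<sigma> ^ CARD('n)) * (\<integral>\<^sup>+ \<theta>. ennreal (\<phi>1 \<theta>) \<partial>lborel)"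
    by (rule nn_integral_cmult) measurable
  also have "\<dots> = ennreal (\<sigma> ^ CARD('n)) * (\<integral>\<^sup>+y. ennreal (indicator (g ` S) y * F y) \<partial>lborel)"
    by (simp add: cov)
  also have "\<dots> = ennreal (\<sigma> ^ CARD('n)) *
         (\<integral>\<^sup>+ w. ennreal (\<rho> x (th x w) * indicator (Omega_SSOSP M f R \<sigma> th) (x, w)) \<partial>lborel)"
    by (simp add: rhs_pt)
  finally show ?thesis .
qed


end
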